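(* Let $\Gamma$ be a single-player extensive-form game without chance nodes, and let $z^*\in\arg\max_{z\in\mathcal Z}u_1(z)$. Then $$\mathrm{VoR}^{\mathrm{opt}}(\Gamma)\le\frac{\max_{z\in\mathcal Z}u_1(z)}{\max_{z\in\mathcal Z}\alpha(z)u_1(z)}\le\frac{1}{\alpha(z^* )}.$$
   Context: A single-player extensive-form game without chance nodes consists of a finite rooted tree (nodes $\mathcal H$, leaves $\mathcal Z$, actions $A_h$), all nonterminal nodes belonging to Player 1, a utility $u_1:\mathcal Z\to\mathbb R_{\ge0}$, and a partition $\mathcal I_1$ of nonterminal nodes into infosets with common action sets $A_I$. For a node $h$ with root-to-$h$ path $(h_0,\dots,h_{d-1})$, $\mathrm{obs}_1(h)=(I_k,a_k)_k$ lists infosets of and actions taken at the $h_k$. $\mathrm{pr}_1(\Gamma)$ has the same tree and utilities, with each infoset partitioned into classes of $h\sim h'\iff\mathrm{obs}_1(h)=\mathrm{obs}_1(h')$. Behavioral strategies assign distributions over $A_I$ to infosets; $u_1(\mathrm{opt}(\cdot))$ is the maximum expected utility; $\mathrm{VoR}^{\mathrm{opt}}(\Gamma)=u_1(\mathrm{opt}(\mathrm{pr}_1(\Gamma)))/u_1(\mathrm{opt}(\Gamma))$. For $z\in\mathcal Z$ with path infosets/actions $(I_k,a_k)$, and $I\in\mathcal I_1$, $a\in A_I$: $n_z(I)=|\{k:I_k=I\}|$, $n_z(a)=|\{k:I_k=I,a_k=a\}|$, $p_z(a)=n_z(a)/n_z(I)$, $\alpha(z)=\prod_{I:n_z(I)>1}\prod_{a\in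 A_I:n_z(a)>0}p_z(a)^{n_z(a)}$. *)

theory Defs
  imports Complex_Main
begin

text \<open>A single-player game tree without chance: nodes are action sequences (histories) in a
finite prefix-closed set H containing the root [].
The infoset of a nonterminal node h is the label lab h (infosets = fibres of lab on NT H).
The utility is u, relevant on leaves.\<close>

definition NT :: "'a list set \<Rightarrow> 'a list set" where
  "NT H = {h \<in> H. \<exists>a. h @ [a] \<in> H}"

definition leaves :: "'a list set \<Rightarrow> 'a list set" where
  "leaves H = {h \<in> H. \<forall>a. h @ [a] \<notin> H}"

definition acts :: "'a list set \<Rightarrow> 'a list \<Rightarrow> 'a set" where
  "acts H h = {a. h @ [a] \<in> H}"

definition actsI :: "'a list set \<Rightarrow> ('a list \<Rightarrow> 'i) \<Rightarrow> 'i \<Rightarrow> 'a set" where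
  "actsI H lab i = {a. \<exists>h \<in> NT H. lab h = i \<and> h @ [a] \<in> H}"

definition wf_game :: "'a list set \<Rightarrow> ('a list \<Rightarrow> 'i) \<Rightarrow> ('a list \<Rightarrow> real) \<Rightarrow> bool" where
  "wf_game H lab u \<longleftrightarrow>
     finite H \<and> [] \<in> H \<and> (\<forall>h a. h @ [a] \<in> H \<longrightarrow> h \<in> H) \<and>
     (\<forall>h \<in> NT H. \<forall>h' \<in> NT H. lab h = lab h' \<longrightarrow> acts H h = acts H h') \<and>
     (\<forall>z \<in> leaves H. u z \<ge> 0)"

definition is_behav :: "'a list set \<Rightarrow> ('a list \<Rightarrow> 'i) \<Rightarrow> ('i \<Rightarrow> 'a \<Rightarrow> real) \<Rightarrow> bool" where
  "is_behav H lab \<sigma> \<longleftrightarrow>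
     (\<forall>h \<in> NT H. (\<forall>a \<in> acts H h. \<sigma> (lab h) a \<ge> 0) \<and> (\<Sum>a \<in> acts H h. \<sigma> (lab h) a) = 1)"

definition reach :: "('a list \<Rightarrow> 'i) \<Rightarrow> ('i \<Rightarrow> 'a \<Rightarrow> real) \<Rightarrow> 'a list \<Rightarrow> real" where
  "reach lab \<sigma> z = (\<Prod>k < length z. \<sigma> (lab (take k z)) (z ! k))"

definition eu :: "'a list set \<Rightarrow> ('a list \<Rightarrow> 'i) \<Rightarrow> ('i \<Rightarrow> 'a \<Rightarrow> real) \<Rightarrow> ('a list \<Rightarrow> real) \<Rightarrow> real" where
  "eu H lab \<sigma> u = (\<Sum>z \<in> leaves H. reach lab \<sigma> z * u z)"

definition opt_val :: "'a list set \<Rightarrow> ('a list \<Rightarrow> 'i) \<Rightarrow> ('a list \<Rightarrow> real) \<Rightarrow> real" where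
  "opt_val H lab u = Sup {eu H lab \<sigma> u | \<sigma>. is_behav H lab \<sigma>}"

definition obs :: "('a list \<Rightarrow> 'i) \<Rightarrow> 'a list \<Rightarrow> ('i \<times> 'a) list" where
  "obs lab h = map (\<lambda>k. (lab (take k h), h ! k)) [0..<length h]"

text \<open>pr_1(Gamma): each infoset split into classes with equal observation history.\<close>
definition pr_inf :: "('a list \<Rightarrow> 'i) \<Rightarrow> 'a list \<Rightarrow> 'i \<times> ('i \<times> 'a) list" where
  "pr_inf lab h = (lab h, obs lab h)"

definition VoR_opt :: "'a list set \<Rightarrow> ('a list \<Rightarrow> 'i) \<Rightarrow> ('a list \<Rightarrow> real) \<Rightarrow> real" where
  "VoR_opt H lab u = opt_val H (pr_inf lab) u / opt_val H lab u"

definition nI :: "('a list \<Rightarrow> 'i) \<Rightarrow> 'a list \<Rightarrow> 'i \<Rightarrow> nat" where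
  "nI lab z i = card {k. k < length z \<and> lab (take k z) = i}"

definition na :: "('a list \<Rightarrow> 'i) \<Rightarrow> 'a list \<Rightarrow> 'i \<Rightarrow> 'a \<Rightarrow> nat" where
  "na lab z i a = card {k. k < length z \<and> lab (take k z) = i \<and> z ! k = a}"

definition pz :: "('a list \<Rightarrow> 'i) \<Rightarrow> 'a list \<Rightarrow> 'i \<Rightarrow> 'a \<Rightarrow> real" where
  "pz lab z i a = real (na lab z i a) / real (nI lab z i)"

definition alpha :: "'a list set \<Rightarrow> ('a list \<Rightarrow> 'i) \<Rightarrow> 'a list \<Rightarrow> real" where
  "alpha H lab z = (\<Prod>i \<in> {i. nI lab z i > 1}.
      \<Prod>a \<in> {a \<in> actsI H lab i. na lab z i a > 0}. pz lab z i a ^ na lab z i a)"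

end

theory Submission
  imports Defs
begin

lemma prefix_closed:
  assumes pc: "\<forall>h a. h @ [a] \<in> H \<longrightarrow> h \<in> H"
  shows "h @ t \<in> H \<Longrightarrow> h \<in> H"
proof (induction t rule: rev_induct)
  case Nil then show ?case by simp
next
  case (snoc x t) then show ?case using pc by (metis append_assoc)
qed

lemma take_in:
  assumes pc: "\<forall>h a. h @ [a] \<in> H \<longrightarrow> h \<in> H" and "z \<in> H"
  shows "take k z \<in> H"
  using prefix_closed[OF pc, of "take k z" "drop k z"] assms(2) by simp

lemma take_NT:
  assumes pc: "\<forall>h a. h @ [a] \<in> H \<longrightarrow> h \<in> H" and "z \<in> H" "k < length z"
  shows "take k z \<in> NT H" "z ! k \<in> acts H (take k z)" "take k z @ [z ! k] \<in> H"
proof -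
  have "take (Suc k) z = take k z @ [z ! k]" using assms(3) by (simp add: take_Suc_conv_app_nth)
  moreover have "take (Suc k) z \<in> H" using take_in[OF pc assms(2)] .
  moreover have "take k z \<in> H" using take_in[OF pc assms(2)] .
  ultimately show "take k z \<in> NT H" "z ! k \<in> acts H (take k z)" "take k z @ [z ! k] \<in> H"
    by (auto simp: NT_def acts_def)
qed

lemma reach_snoc: "reach lab \<sigma> (h @ [a]) = reach lab \<sigma> h * \<sigma> (lab h) a"
  unfolding reach_def
  by (auto simp: prod.lessThan_Suc nth_append intro!: prod.cong)

lemma reach_nonneg:
  assumes pc: "\<forall>h a. h @ [a] \<in> H \<longrightarrow> h \<in> H" and beh: "is_behav H lab \<sigma>" and "z \<in> H"
  shows "reach lab \<sigma> z \<ge> 0"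
proof -
  have "0 \<le> \<sigma> (lab (take k z)) (z ! k)" if k: "k < length z" for k
    using beh take_NT[OF pc assms(3) k] unfolding is_behav_def by blast
  then show ?thesis unfolding reach_def by (auto intro!: prod_nonneg)
qed

lemma sum_reach:
  assumes fin: "finite H" and pc: "\<forall>h a. h @ [a] \<in> H \<longrightarrow> h \<in> H"
    and beh: "is_behav H lab \<sigma>" and hH: "h \<in> H"
  shows "(\<Sum>z \<in> {z \<in> leaves H. \<exists>t. z = h @ t}. reach lab \<sigma> z) = reach lab \<sigma> h"
proof -
  define E where "E h = {z \<in> leaves H. \<exists>t. z = h @ t}" for h
  define N where "N = Max (length ` H)"
  have "\<forall>h \<in> H. N - length h = n \<longrightarrow> (\<Sum>z \<in> E h. reach lab \<sigma> z) = reach lab \<sigma> h" for n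
  proof (induction n rule: less_induct)
    case (less n)
    show ?case
    proof (intro ballI impI)
      fix h assume h: "h \<in> H" and hn: "N - length h = n"
      show "(\<Sum>z \<in> E h. reach lab \<sigma> z) = reach lab \<sigma> h"
      proof (cases "h \<in> leaves H")
        case True
        have "E h = {h}"
        proof safe
          fix z assume "z \<in> E h"
          then obtain t where z: "z = h @ t" "z \<in> leaves H" unfolding E_def by blast
          show "z = h"
          proof (cases t)
            case (Cons a t')
            then have "(h @ [a]) @ t' \<in> H" using z by (simp add: leaves_def)
            then have "h @ [a] \<in> H" using prefix_closed[OF pc] by blast
            then show ?thesis using True by (simp add: leaves_def)
          qed (use z in simp)
        next
          show "h \<in> E h" using True unfolding E_def by auto
        qed
        then show ?thesis by simp
      next
        case False
        then obtain a0 where "h @ [a0] \<in> H" using h by (auto simp: leaves_def)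
        then have hNT: "h \<in> NT H" using h by (auto simp: NT_def)
        have finA: "finite (acts H h)"
        proof -
          have "acts H h = (\<lambda>a. h @ [a]) -` H" by (auto simp: acts_def)
          then show ?thesis using finite_vimageI[OF fin, of "\<lambda>a. h @ [a]"] by (simp add: inj_def)
        qed
        have Eh: "E h = (\<Union>a \<in> acts H h. E (h @ [a]))"
        proof safe
          fix z assume "z \<in> E h"
          then obtain t where z: "z = h @ t" "z \<in> leaves H" unfolding E_def by blast
          show "z \<in> (\<Union>a \<in> acts H h. E (h @ [a]))"
          proof (cases t)
            case Nil then show ?thesis using z False by simp
          next
            case (Cons a t')
            then have "(h @ [a]) @ t' \<in> H" using z by (simp add: leaves_def)
            then have "h @ [a] \<in> H" using prefix_closed[OF pc] by blast
            then show ?thesis using z Cons unfolding E_def acts_def by auto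
          qed
        next
          fix z a assume "a \<in> acts H h" "z \<in> E (h @ [a])"
          then show "z \<in> E h" unfolding E_def by auto
        qed
        have finE: "finite (E x)" for x
          using fin unfolding E_def leaves_def by (auto intro: finite_subset)
        have "(\<Sum>z \<in> E h. reach lab \<sigma> z) = (\<Sum>a \<in> acts H h. \<Sum>z \<in> E (h @ [a]). reach lab \<sigma> z)"
          unfolding Eh
          by (rule sum.UNION_disjoint[OF finA]) (simp add: finE, auto simp: E_def)
        also have "\<dots> = (\<Sum>a \<in> acts H h. reach lab \<sigma> (h @ [a]))"
        proof (rule sum.cong[OF refl])
          fix a assume a: "a \<in> acts H h"
          then have ha: "h @ [a] \<in> H" by (simp add: acts_def)
          then have "length (h @ [a]) \<le> N" unfolding N_def
            by (metis Max_ge finite_imageI imageI fin)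
          then have "N - length (h @ [a]) < n" using hn by simp
          then show "(\<Sum>z \<in> E (h @ [a]). reach lab \<sigma> z) = reach lab \<sigma> (h @ [a])"
            using less ha by blast
        qed
        also have "\<dots> = reach lab \<sigma> h * (\<Sum>a \<in> acts H h. \<sigma> (lab h) a)"
          by (simp add: reach_snoc sum_distrib_left)
        also have "\<dots> = reach lab \<sigma> h" using beh hNT unfolding is_behav_def by simp
        finally show ?thesis .
      qed
    qed
  qed
  then show ?thesis using hH unfolding E_def by blast
qed

lemma alpha_pos: "alpha H lab z > 0"
  unfolding alpha_def
proof (intro prod_pos ballI)
  fix i a assume i: "i \<in> {i. nI lab z i > 1}" and a: "a \<in> {a \<in> actsI H lab i. na lab z i a > 0}"
  then have "pz lab z i a > 0" unfolding pz_def by simp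
  then show "pz lab z i a ^ na lab z i a > 0" by simp
qed

lemma wf_parts:
  assumes "wf_game H lab u"
  shows "finite H" "[] \<in> H" "\<forall>h a. h @ [a] \<in> H \<longrightarrow> h \<in> H"
    "\<forall>h \<in> NT H. \<forall>h' \<in> NT H. lab h = lab h' \<longrightarrow> acts H h = acts H h'"
    "\<forall>z \<in> leaves H. u z \<ge> 0"
  using assms unfolding wf_game_def by blast+

lemma actsI_eq:
  assumes wf: "wf_game H lab u" and h: "h \<in> NT H"
  shows "actsI H lab (lab h) = acts H h"
proof -
  have eq: "\<And>h'. h' \<in> NT H \<Longrightarrow> lab h' = lab h \<Longrightarrow> acts H h' = acts H h"
    using wf_parts(4)[OF wf] h by blast
  show ?thesis
  proof
    show "actsI H lab (lab h) \<subseteq> acts H h"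
    proof
      fix a assume "a \<in> actsI H lab (lab h)"
      then obtain h' where "h' \<in> NT H" "lab h' = lab h" "h' @ [a] \<in> H" unfolding actsI_def by blast
      then show "a \<in> acts H h" using eq[of h'] unfolding acts_def by blast
    qed
    show "acts H h \<subseteq> actsI H lab (lab h)" using h unfolding actsI_def acts_def by blast
  qed
qed

lemma finite_acts:
  assumes "finite H" shows "finite (acts H h)"
proof -
  have "acts H h = (\<lambda>a. h @ [a]) -` H" by (auto simp: acts_def)
  then show ?thesis using finite_vimageI[OF assms, of "\<lambda>a. h @ [a]"] by (simp add: inj_def)
qed

lemma sum_na:
  assumes wf: "wf_game H lab u" and zH: "z \<in> H" and h: "h \<in> NT H"
  shows "(\<Sum>a \<in> acts H h. real (na lab z (lab h) a)) = real (nI lab z (lab h))"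
proof -
  note pc = wf_parts(3)[OF wf]
  define K where "K = {k. k < length z \<and> lab (take k z) = lab h}"
  have finK: "finite K" unfolding K_def by simp
  have sub: "(!) z ` K \<subseteq> acts H h"
  proof
    fix a assume "a \<in> (!) z ` K"
    then obtain k where k: "k < length z" "lab (take k z) = lab h" "a = z ! k" unfolding K_def by blast
    have "take k z \<in> NT H" "z ! k \<in> acts H (take k z)" using take_NT[OF pc zH k(1)] by auto
    moreover have "acts H (take k z) = acts H h" using wf_parts(4)[OF wf] h k(2) \<open>take k z \<in> NT H\<close> by blast
    ultimately show "a \<in> acts H h" using k(3) by simp
  qed
  have "(\<Sum>a \<in> acts H h. na lab z (lab h) a) = (\<Sum>a \<in> acts H h. \<Sum>x \<in> {x. x \<in> K \<and> z ! x = a}. (1::nat))"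
    unfolding na_def K_def by (intro sum.cong refl) (simp add: conj_assoc)
  also have "\<dots> = (\<Sum>x \<in> K. (1::nat))"
    by (rule sum.group[OF finK finite_acts[OF wf_parts(1)[OF wf]] sub])
  also have "\<dots> = nI lab z (lab h)" unfolding nI_def K_def by simp
  finally have "real (\<Sum>a \<in> acts H h. na lab z (lab h) a) = real (nI lab z (lab h))" by (rule arg_cong)
  then show ?thesis by simp
qed

lemma alpha_strategy:
  assumes wf: "wf_game H lab u" and zH: "z \<in> H"
  shows "\<exists>\<sigma>. is_behav H lab \<sigma> \<and> reach lab \<sigma> z = alpha H lab z"
proof -
  note pc = wf_parts(3)[OF wf]
  define c where "c i = (SOME a. a \<in> actsI H lab i)" for i
  define \<sigma> where "\<sigma> i a = (if nI lab z i > 0 then pz lab z i a else if a = c i then 1 else 0)" for i a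
  have beh: "is_behav H lab \<sigma>"
    unfolding is_behav_def
  proof
    fix h assume h: "h \<in> NT H"
    have nn: "\<forall>a \<in> acts H h. \<sigma> (lab h) a \<ge> 0" unfolding \<sigma>_def pz_def by simp
    have "(\<Sum>a\<in>acts H h. \<sigma> (lab h) a) = 1"
    proof (cases "nI lab z (lab h) > 0")
      case True
      then have "(\<Sum>a\<in>acts H h. \<sigma> (lab h) a)
          = (\<Sum>a\<in>acts H h. real (na lab z (lab h) a) / real (nI lab z (lab h)))"
        unfolding \<sigma>_def pz_def by simp
      also have "\<dots> = (\<Sum>a\<in>acts H h. real (na lab z (lab h) a)) / real (nI lab z (lab h))"
        by (simp add: sum_divide_distrib)
      also have "\<dots> = 1" using sum_na[OF wf zH h] True by simp
      finally show ?thesis .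
    next
      case False
      have "acts H h \<noteq> {}" using h unfolding NT_def acts_def by blast
      then have "c (lab h) \<in> acts H h" unfolding c_def actsI_eq[OF wf h] by (simp add: some_in_eq)
      moreover have "(\<Sum>a\<in>acts H h. \<sigma> (lab h) a) = (\<Sum>a\<in>acts H h. if a = c (lab h) then 1 else 0)"
        using False unfolding \<sigma>_def by simp
      ultimately show ?thesis using finite_acts[OF wf_parts(1)[OF wf]] by simp
    qed
    then show "(\<forall>a \<in> acts H h. \<sigma> (lab h) a \<ge> 0) \<and> (\<Sum>a\<in>acts H h. \<sigma> (lab h) a) = 1"
      using nn by blast
  qed
  define K where "K = {..<length z}"
  define g where "g k = (lab (take k z), z ! k)" for k
  define f where "f y = pz lab z (fst y) (snd y)" for y
  have pos: "nI lab z (lab (take k z)) > 0" if "k < length z" for k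
  proof -
    have "k \<in> {k'. k' < length z \<and> lab (take k' z) = lab (take k z)}" using that by simp
    then show ?thesis unfolding nI_def by (subst card_gt_0_iff) auto
  qed
  have "reach lab \<sigma> z = (\<Prod>k\<in>K. f (g k))"
    unfolding reach_def K_def by (intro prod.cong refl) (simp add: \<sigma>_def pos f_def g_def)
  define K1 where "K1 = {k \<in> K. nI lab z (lab (take k z)) > 1}"
  have "(\<Prod>k\<in>K. f (g k)) = (\<Prod>k\<in>K1. f (g k))"
  proof (rule prod.mono_neutral_right)
    show "finite K" unfolding K_def by simp
    show "K1 \<subseteq> K" unfolding K1_def by blast
    show "\<forall>k\<in>K - K1. f (g k) = 1"
    proof
      fix k assume k: "k \<in> K - K1"
      define i where "i = lab (take k z)"
      have kl: "k < length z" using k unfolding K_def by simp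
      have n1: "nI lab z i = 1" using k pos[OF kl] unfolding K1_def K_def i_def by auto
      have sub: "{k'. k' < length z \<and> lab (take k' z) = i \<and> z ! k' = z ! k}
          \<subseteq> {k'. k' < length z \<and> lab (take k' z) = i}" by blast
      have "na lab z i (z ! k) \<le> 1" unfolding na_def using card_mono[OF _ sub] n1 unfolding nI_def by simp
      moreover have "na lab z i (z ! k) > 0" unfolding na_def using kl
        by (subst card_gt_0_iff) (auto simp: i_def)
      ultimately have "na lab z i (z ! k) = 1" by simp
      then show "f (g k) = 1" using n1 unfolding f_def g_def pz_def i_def by simp
    qed
  qed
  define I where "I = {i. nI lab z i > 1}"
  define B where "B i = {a \<in> actsI H lab i. na lab z i a > 0}" for i
  define T where "T = Sigma I B"
  have finI: "finite I"
  proof (rule finite_subset)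
    show "I \<subseteq> (\<lambda>k. lab (take k z)) ` K"
    proof
      fix i assume "i \<in> I"
      then have "card {k. k < length z \<and> lab (take k z) = i} > 0" unfolding I_def nI_def by simp
      then have "{k. k < length z \<and> lab (take k z) = i} \<noteq> {}" by (metis card.empty less_irrefl)
      then show "i \<in> (\<lambda>k. lab (take k z)) ` K" unfolding K_def by auto
    qed
  qed (simp add: K_def)
  have finB: "finite (B i)" for i
  proof (rule finite_subset)
    show "B i \<subseteq> (!) z ` K"
    proof
      fix a assume "a \<in> B i"
      then have "card {k. k < length z \<and> lab (take k z) = i \<and> z ! k = a} > 0" unfolding B_def na_def by simp
      then have "{k. k < length z \<and> lab (take k z) = i \<and> z ! k = a} \<noteq> {}" by (metis card.empty less_irrefl)
      then show "a \<in> (!) z ` K" unfolding K_def by auto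
    qed
  qed (simp add: K_def)
  have finT: "finite T" unfolding T_def using finI finB by simp
  have gT: "g ` K1 \<subseteq> T"
  proof
    fix y assume "y \<in> g ` K1"
    then obtain k where k: "k \<in> K1" "y = g k" by blast
    have kl: "k < length z" using k unfolding K1_def K_def by simp
    have "z ! k \<in> actsI H lab (lab (take k z))"
      using take_NT[OF pc zH kl] unfolding actsI_def by blast
    moreover have "na lab z (lab (take k z)) (z ! k) > 0" unfolding na_def using kl
      by (subst card_gt_0_iff) auto
    ultimately show "y \<in> T" using k unfolding T_def I_def B_def K1_def g_def by simp
  qed
  have finK1: "finite K1" unfolding K1_def K_def by simp
  have "(\<Prod>k\<in>K1. f (g k)) = (\<Prod>y\<in>T. \<Prod>k\<in>{k. k \<in> K1 \<and> g k = y}. f (g k))"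
    by (rule prod.group[symmetric, OF finK1 finT gT])
  also have "\<dots> = (\<Prod>y\<in>T. f y ^ card {k. k \<in> K1 \<and> g k = y})"
  proof (rule prod.cong[OF refl])
    fix y
    have "(\<Prod>k\<in>{k. k \<in> K1 \<and> g k = y}. f (g k)) = (\<Prod>k\<in>{k. k \<in> K1 \<and> g k = y}. f y)"
      by (rule prod.cong) auto
    then show "(\<Prod>k\<in>{k. k \<in> K1 \<and> g k = y}. f (g k)) = f y ^ card {k. k \<in> K1 \<and> g k = y}"
      by simp
  qed
  also have "\<dots> = (\<Prod>y\<in>T. f y ^ na lab z (fst y) (snd y))"
  proof (rule prod.cong[OF refl])
    fix y assume "y \<in> T"
    then obtain i a where y: "y = (i, a)" "i \<in> I" by (auto simp: T_def)
    have "{k. k \<in> K1 \<and> g k = y} = {k. k < length z \<and> lab (take k z) = i \<and> z ! k = a}"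
      using y unfolding K1_def K_def g_def I_def by auto
    then show "f y ^ card {k. k \<in> K1 \<and> g k = y} = f y ^ na lab z (fst y) (snd y)"
      using y unfolding na_def by simp
  qed
  also have "\<dots> = (\<Prod>i\<in>I. \<Prod>a\<in>B i. pz lab z i a ^ na lab z i a)"
    unfolding T_def f_def using prod.Sigma[OF finI, of B "\<lambda>i a. pz lab z i a ^ na lab z i a"] finB
    by (simp add: case_prod_beta')
  also have "\<dots> = alpha H lab z" unfolding alpha_def I_def B_def by simp
  finally show ?thesis using beh \<open>reach lab \<sigma> z = (\<Prod>k\<in>K. f (g k))\<close>
    \<open>(\<Prod>k\<in>K. f (g k)) = (\<Prod>k\<in>K1. f (g k))\<close> by auto
qed

lemma eu_le:
  assumes wf: "wf_game H lab u" and beh: "is_behav H lab' \<sigma>"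
  shows "eu H lab' \<sigma> u \<le> Max (u ` leaves H)"
proof -
  note fin = wf_parts(1)[OF wf] and pc = wf_parts(3)[OF wf]
  have finL: "finite (leaves H)" using fin unfolding leaves_def by simp
  have sr: "(\<Sum>z \<in> leaves H. reach lab' \<sigma> z) = 1"
    using sum_reach[OF fin pc beh wf_parts(2)[OF wf]] by (simp add: reach_def)
  have "eu H lab' \<sigma> u \<le> (\<Sum>z \<in> leaves H. reach lab' \<sigma> z * Max (u ` leaves H))"
    unfolding eu_def
  proof (rule sum_mono)
    fix z assume z: "z \<in> leaves H"
    then have "reach lab' \<sigma> z \<ge> 0" using reach_nonneg[OF pc beh] unfolding leaves_def by blast
    moreover have "u z \<le> Max (u ` leaves H)" using finL z by simp
    ultimately show "reach lab' \<sigma> z * u z \<le> reach lab' \<sigma> z * Max (u ` leaves H)"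
      by (rule mult_left_mono[rotated])
  qed
  also have "\<dots> = Max (u ` leaves H)" using sr by (simp add: sum_distrib_right[symmetric])
  finally show ?thesis .
qed

theorem proposition7:
  fixes H :: "'a list set" and lab :: "'a list \<Rightarrow> 'i" and u :: "'a list \<Rightarrow> real"
    and zs :: "'a list"
  assumes "wf_game H lab u"
    and "zs \<in> leaves H" and "\<forall>z \<in> leaves H. u z \<le> u zs"
  shows "VoR_opt H lab u \<le> Max (u ` leaves H) / Max ((\<lambda>z. alpha H lab z * u z) ` leaves H)
       \<and> Max (u ` leaves H) / Max ((\<lambda>z. alpha H lab z * u z) ` leaves H) \<le> 1 / alpha H lab zs"
proof -
  note wf = assms(1)
  note fin = wf_parts(1)[OF wf] and pc = wf_parts(3)[OF wf] and unn = wf_parts(5)[OF wf]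
  define L where "L = leaves H"
  define M where "M = Max (u ` L)"
  define Ma where "Ma = Max ((\<lambda>z. alpha H lab z * u z) ` L)"
  have finL: "finite L" using fin unfolding L_def leaves_def by simp
  have zsL: "zs \<in> L" using assms(2) L_def by simp
  have LH: "L \<subseteq> H" unfolding L_def leaves_def by blast
  have M_eq: "M = u zs" unfolding M_def
    by (rule Max_eqI) (use finL zsL assms(3) L_def in auto)
  have uzs: "u zs \<ge> 0" using unn assms(2) by blast
  have Ma_ge: "Ma \<ge> alpha H lab zs * u zs" unfolding Ma_def using finL zsL by simp
  have azs: "alpha H lab zs > 0" by (rule alpha_pos)
  obtain zm where zm: "zm \<in> L" "alpha H lab zm * u zm = Ma"
    unfolding Ma_def using Max_in[of "(\<lambda>z. alpha H lab z * u z) ` L"] finL zsL by fastforce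
  obtain \<sigma>0 where s0: "is_behav H lab \<sigma>0" "reach lab \<sigma>0 zm = alpha H lab zm"
    using alpha_strategy[OF wf] zm LH by blast
  have "eu H lab \<sigma>0 u \<ge> reach lab \<sigma>0 zm * u zm"
    unfolding eu_def
  proof (rule member_le_sum)
    show "zm \<in> leaves H" using zm L_def by simp
    show "finite (leaves H)" using finL L_def by simp
    fix x assume "x \<in> leaves H - {zm}"
    then have "x \<in> leaves H" by simp
    then show "0 \<le> reach lab \<sigma>0 x * u x"
      using reach_nonneg[OF pc s0(1)] unn unfolding leaves_def by auto
  qed
  then have eu0: "eu H lab \<sigma>0 u \<ge> Ma" using s0 zm by simp
  have bdd: "bdd_above {eu H lab' \<sigma> u | \<sigma>. is_behav H lab' \<sigma>}" for lab' :: "'a list \<Rightarrow> 'j"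
    by (rule bdd_aboveI[where M = M]) (auto simp: M_def L_def intro: eu_le[OF wf])
  have opt: "opt_val H lab u \<ge> Ma"
  proof -
    have "eu H lab \<sigma>0 u \<le> opt_val H lab u" unfolding opt_val_def
      by (rule cSup_upper[OF _ bdd]) (use s0 in blast)
    then show ?thesis using eu0 by simp
  qed
  have beh': "is_behav H (pr_inf lab) (\<lambda>p a. \<sigma>0 (fst p) a)"
    using s0(1) unfolding is_behav_def pr_inf_def by simp
  have optpr: "opt_val H (pr_inf lab) u \<le> M" unfolding opt_val_def
  proof (rule cSup_least)
    show "{eu H (pr_inf lab) \<sigma> u |\<sigma>. is_behav H (pr_inf lab) \<sigma>} \<noteq> {}" using beh' by blast
  qed (auto simp: M_def L_def intro: eu_le[OF wf])
  have Ma0: "Ma \<ge> 0" using Ma_ge azs uzs by (meson mult_nonneg_nonneg less_imp_le order_trans)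
  have part1: "opt_val H (pr_inf lab) u / opt_val H lab u \<le> M / Ma"
  proof (cases "Ma > 0")
    case True
    have "opt_val H (pr_inf lab) u / opt_val H lab u \<le> M / opt_val H lab u"
      using optpr opt Ma0 by (intro divide_right_mono) auto
    also have "\<dots> \<le> M / Ma" using True opt M_eq uzs by (intro divide_left_mono) auto
    finally show ?thesis .
  next
    case False
    then have "Ma = 0" using Ma0 by simp
    then have "alpha H lab zs * u zs \<le> 0" using Ma_ge by simp
    then have "u zs = 0" using azs uzs by (simp add: mult_le_0_iff)
    then have "M = 0" using M_eq by simp
    then have "opt_val H (pr_inf lab) u \<le> 0" using optpr by simp
    moreover have "opt_val H lab u \<ge> 0" using opt Ma0 by simp
    ultimately show ?thesis using \<open>M = 0\<close> by (simp add: divide_nonpos_nonneg)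
  qed
  have part2: "M / Ma \<le> 1 / alpha H lab zs"
  proof (cases "u zs > 0")
    case True
    then have p: "alpha H lab zs * u zs > 0" using azs by simp
    have "M / Ma \<le> u zs / (alpha H lab zs * u zs)"
      unfolding M_eq by (rule divide_left_mono) (use Ma_ge p uzs in auto)
    also have "\<dots> = 1 / alpha H lab zs" using True by simp
    finally show ?thesis .
  next
    case False
    then have "M = 0" using M_eq uzs by simp
    then show ?thesis using azs by simp
  qed
  show ?thesis using part1 part2 unfolding VoR_opt_def M_def Ma_def L_def by simp
qed

end
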